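(* If a formula $\varphi$ is satisfiable in a PWK-Kripke model, then it is satisfiable in a PWK-Kripke model $(W,R,v)$ with $W$ finite.
   Context: Formulas are built from a countably infinite set of propositional variables and the constants $0,1$ using the unary connectives $\neg$, $J_2$, $\Box$ and the binary connective $\vee$. Let $\mathbf{WK}^e$ be the algebra on $\{0,\tfrac12,1\}$ with $\neg0=1$, $\neg1=0$, $\neg\tfrac12=\tfrac12$; $a\vee b=\tfrac12$ if $a=\tfrac12$ or $b=\tfrac12$, otherwise $a\vee b=\max(a,b)$; $J_2(1)=1$, $J_2(\tfrac12)=J_2(0)=0$. A PWK-Kripke model is a triple $(W,R,v)$ with $W\neq\emptyset$, $R\subseteq W\times W$, $v:W\times\mathrm{Fm}\to\{0,\tfrac12,1\}$ such that for each $w$, $v(w,\cdot)$ commutes with $\neg,\vee,J_2,0,1$ as computed in $\mathbf{WK}^e$, and: $v(w,\Box\varphi)=\tfrac12$ iff $v(w,\varphi)=\tfrac12$; $v(w,\Box\varphi)=1$ iff $v(w,\varphi)\neq\tfrac12$ and $v(s,\varphi)\neq0$ for all $s$ with $wRs$; $v(w,\Box\varphi)=0$ iff $v(w,\varphi)\neq\tfrac12$ and $v(s,\varphi)=0$ for some $s$ with $wRs$. A formula $\varphi$ is satisfiable in a PWK-Kripke model $(W,R,v)$ if $v(w,\varphi)\neq0$ for some $w\in W$. *)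

theory Defs
  imports Main
begin

datatype fm = Var nat | Zero | One | Neg fm | J2 fm | Box fm | Disj fm fm

text \<open>Truth values of WK^e: F = 0, H = 1/2, T = 1.\<close>
datatype wk = F | H | T

fun wk_neg :: "wk \<Rightarrow> wk" where
  "wk_neg F = T" | "wk_neg T = F" | "wk_neg H = H"

fun wk_rank :: "wk \<Rightarrow> nat" where
  "wk_rank F = 0" | "wk_rank H = 1" | "wk_rank T = 2"

definition wk_or :: "wk \<Rightarrow> wk \<Rightarrow> wk" where
  "wk_or a b = (if a = H \<or> b = H then H
                else if wk_rank a \<le> wk_rank b then b else a)"

fun wk_J2 :: "wk \<Rightarrow> wk" where
  "wk_J2 T = T" | "wk_J2 H = F" | "wk_J2 F = F"

definition pwk_model :: "'w set \<Rightarrow> ('w \<times> 'w) set \<Rightarrow> ('w \<Rightarrow> fm \<Rightarrow> wk) \<Rightarrow> bool" where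
  "pwk_model W R v \<longleftrightarrow> W \<noteq> {} \<and> R \<subseteq> W \<times> W \<and>
    (\<forall>w\<in>W.
       v w Zero = F \<and> v w One = T \<and>
       (\<forall>\<phi>. v w (Neg \<phi>) = wk_neg (v w \<phi>)) \<and>
       (\<forall>\<phi> \<psi>. v w (Disj \<phi> \<psi>) = wk_or (v w \<phi>) (v w \<psi>)) \<and>
       (\<forall>\<phi>. v w (J2 \<phi>) = wk_J2 (v w \<phi>)) \<and>
       (\<forall>\<phi>. (v w (Box \<phi>) = H \<longleftrightarrow> v w \<phi> = H) \<and>
             (v w (Box \<phi>) = T \<longleftrightarrow> v w \<phi> \<noteq> H \<and> (\<forall>s\<in>W. (w, s) \<in> R \<longrightarrow> v s \<phi> \<noteq> F)) \<and>
             (v w (Box \<phi>) = F \<longleftrightarrow> v w \<phi> \<noteq> H \<and> (\<exists>s\<in>W. (w, s) \<in> R \<and> v s \<phi> = F))))"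

definition satisfiable_in :: "fm \<Rightarrow> 'w set \<Rightarrow> ('w \<times> 'w) set \<Rightarrow> ('w \<Rightarrow> fm \<Rightarrow> wk) \<Rightarrow> bool" where
  "satisfiable_in \<phi> W R v \<longleftrightarrow> (\<exists>w\<in>W. v w \<phi> \<noteq> F)"

end

theory Submission
  imports Defs "HOL-Library.FuncSet"
begin

fun ev :: "'a set \<Rightarrow> ('a \<times> 'a) set \<Rightarrow> ('a \<Rightarrow> nat \<Rightarrow> wk) \<Rightarrow> 'a \<Rightarrow> fm \<Rightarrow> wk" where
  "ev W R V w (Var n) = V w n"
| "ev W R V w Zero = F"
| "ev W R V w One = T"
| "ev W R V w (Neg p) = wk_neg (ev W R V w p)"
| "ev W R V w (J2 p) = wk_J2 (ev W R V w p)"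
| "ev W R V w (Disj p q) = wk_or (ev W R V w p) (ev W R V w q)"
| "ev W R V w (Box p) = (if ev W R V w p = H then H
     else if (\<forall>s\<in>W. (w, s) \<in> R \<longrightarrow> ev W R V s p \<noteq> F) then T else F)"

lemma ev_model:
  assumes "W \<noteq> {}" "R \<subseteq> W \<times> W"
  shows "pwk_model W R (ev W R V)"
  using assms unfolding pwk_model_def by auto

fun sub :: "fm \<Rightarrow> fm set" where
  "sub (Var n) = {Var n}"
| "sub Zero = {Zero}"
| "sub One = {One}"
| "sub (Neg p) = insert (Neg p) (sub p)"
| "sub (J2 p) = insert (J2 p) (sub p)"
| "sub (Box p) = insert (Box p) (sub p)"
| "sub (Disj p q) = insert (Disj p q) (sub p \<union> sub q)"

lemma finite_sub: "finite (sub p)"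
  by (induct p) auto

lemma self_sub: "p \<in> sub p"
  by (cases p) auto

lemma ev_iso:
  assumes "inj_on g W" "R \<subseteq> W \<times> W" "t \<in> W"
  shows "ev (g ` W) ((\<lambda>(a,b). (g a, g b)) ` R) (\<lambda>x n. V (inv_into W g x) n) (g t) p
         = ev W R V t p"
  using assms(3)
proof (induct p arbitrary: t)
  case (Box p)
  have "(\<forall>s\<in>g ` W. (g t, s) \<in> (\<lambda>(a,b). (g a, g b)) ` R \<longrightarrow>
          ev (g ` W) ((\<lambda>(a,b). (g a, g b)) ` R) (\<lambda>x n. V (inv_into W g x) n) s p \<noteq> F)
        = (\<forall>s\<in>W. (t, s) \<in> R \<longrightarrow> ev W R V s p \<noteq> F)"
  proof
    assume A: "\<forall>s\<in>g ` W. (g t, s) \<in> (\<lambda>(a,b). (g a, g b)) ` R \<longrightarrow>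
          ev (g ` W) ((\<lambda>(a,b). (g a, g b)) ` R) (\<lambda>x n. V (inv_into W g x) n) s p \<noteq> F"
    show "\<forall>s\<in>W. (t, s) \<in> R \<longrightarrow> ev W R V s p \<noteq> F"
    proof (intro ballI impI)
      fix s assume "s \<in> W" "(t,s) \<in> R"
      then have "(g t, g s) \<in> (\<lambda>(a,b). (g a, g b)) ` R" by force
      then have "ev (g ` W) ((\<lambda>(a,b). (g a, g b)) ` R) (\<lambda>x n. V (inv_into W g x) n) (g s) p \<noteq> F"
        using A \<open>s \<in> W\<close> by blast
      then show "ev W R V s p \<noteq> F" using Box(1)[OF \<open>s \<in> W\<close>] by simp
    qed
  next
    assume A: "\<forall>s\<in>W. (t, s) \<in> R \<longrightarrow> ev W R V s p \<noteq> F"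
    show "\<forall>s\<in>g ` W. (g t, s) \<in> (\<lambda>(a,b). (g a, g b)) ` R \<longrightarrow>
          ev (g ` W) ((\<lambda>(a,b). (g a, g b)) ` R) (\<lambda>x n. V (inv_into W g x) n) s p \<noteq> F"
    proof (intro ballI impI)
      fix s assume "s \<in> g ` W" "(g t, s) \<in> (\<lambda>(a,b). (g a, g b)) ` R"
      then obtain a b where ab: "(a,b) \<in> R" "g t = g a" "s = g b" by auto
      with assms(2) have "a \<in> W" "b \<in> W" by auto
      with ab Box.prems assms(1) have "a = t" by (auto dest: inj_onD)
      with A ab \<open>b \<in> W\<close> Box(1)[of b] show "ev (g ` W) ((\<lambda>(a,b). (g a, g b)) ` R) (\<lambda>x n. V (inv_into W g x) n) s p \<noteq> F"
        by auto
    qed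
  qed
  then show ?case using Box by simp
qed (use assms in auto)

lemma wk_univ: "(UNIV :: wk set) = {F, H, T}"
  using wk.exhaust by blast

theorem mainTheorem12:
  fixes \<phi> :: fm and W :: "'w set" and R :: "('w \<times> 'w) set" and v :: "'w \<Rightarrow> fm \<Rightarrow> wk"
  assumes "pwk_model W R v" and "satisfiable_in \<phi> W R v"
  shows "\<exists>(W' :: nat set) R' v'. finite W' \<and> pwk_model W' R' v' \<and> satisfiable_in \<phi> W' R' v'"
proof -
  define S where "S = sub \<phi>"
  define tp where "tp w = restrict (v w) S" for w
  define W1 where "W1 = tp ` W"
  define R1 where "R1 = (\<lambda>(a,b). (tp a, tp b)) ` R"
  define V1 where "V1 t n = (if Var n \<in> S then t (Var n) else F)" for t :: "fm \<Rightarrow> wk" and n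
  have M: "W \<noteq> {}" "R \<subseteq> W \<times> W" using assms(1) unfolding pwk_model_def by auto
  have fin: "finite W1"
  proof (rule finite_subset)
    show "W1 \<subseteq> (\<Pi>\<^sub>E i \<in> S. (UNIV :: wk set))" unfolding W1_def tp_def by auto
    show "finite (\<Pi>\<^sub>E i \<in> S. (UNIV :: wk set))"
      by (rule finite_PiE) (auto simp: S_def finite_sub wk_univ)
  qed
  have R1W: "R1 \<subseteq> W1 \<times> W1" using M unfolding R1_def W1_def by auto
  have key: "\<And>w. w \<in> W \<Longrightarrow> sub p \<subseteq> S \<Longrightarrow> ev W1 R1 V1 (tp w) p = v w p" for p
  proof (induct p)
    case (Var n)
    then show ?case by (simp add: V1_def tp_def)
  next
    case Zero then show ?case using assms(1) unfolding pwk_model_def by auto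
  next
    case One then show ?case using assms(1) unfolding pwk_model_def by auto
  next
    case (Neg p) then show ?case using assms(1) unfolding pwk_model_def by auto
  next
    case (J2 p) then show ?case using assms(1) unfolding pwk_model_def by auto
  next
    case (Disj p q) then show ?case using assms(1) unfolding pwk_model_def by auto
  next
    case (Box p)
    have IH: "\<And>u. u \<in> W \<Longrightarrow> ev W1 R1 V1 (tp u) p = v u p" using Box by auto
    have inS: "Box p \<in> S" "p \<in> S" using Box.prems(2) self_sub[of p] by auto
    have same: "\<And>a q. tp a = tp w \<Longrightarrow> q \<in> S \<Longrightarrow> v a q = v w q"
      unfolding tp_def by (metis restrict_apply')
    have vm: "\<And>u. u \<in> W \<Longrightarrow> (v u (Box p) = H \<longleftrightarrow> v u p = H) \<and>
             (v u (Box p) = T \<longleftrightarrow> v u p \<noteq> H \<and> (\<forall>s\<in>W. (u, s) \<in> R \<longrightarrow> v s p \<noteq> F)) \<and>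
             (v u (Box p) = F \<longleftrightarrow> v u p \<noteq> H \<and> (\<exists>s\<in>W. (u, s) \<in> R \<and> v s p = F))"
      using assms(1) unfolding pwk_model_def by blast
    show ?case
    proof (cases "v w p = H")
      case True
      then show ?thesis using IH Box.prems vm[of w] by simp
    next
      case False
      have eq: "(\<forall>s\<in>W1. (tp w, s) \<in> R1 \<longrightarrow> ev W1 R1 V1 s p \<noteq> F) \<longleftrightarrow> v w (Box p) = T"
      proof
        assume A: "\<forall>s\<in>W1. (tp w, s) \<in> R1 \<longrightarrow> ev W1 R1 V1 s p \<noteq> F"
        have "\<forall>s\<in>W. (w, s) \<in> R \<longrightarrow> v s p \<noteq> F"
        proof (intro ballI impI)
          fix s assume "s \<in> W" "(w,s) \<in> R"
          then have "(tp w, tp s) \<in> R1" "tp s \<in> W1" unfolding R1_def W1_def by force+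
          with A IH[OF \<open>s \<in> W\<close>] show "v s p \<noteq> F" by auto
        qed
        then show "v w (Box p) = T" using vm[OF Box.prems(1)] False by blast
      next
        assume B: "v w (Box p) = T"
        show "\<forall>s\<in>W1. (tp w, s) \<in> R1 \<longrightarrow> ev W1 R1 V1 s p \<noteq> F"
        proof (intro ballI impI)
          fix s assume "s \<in> W1" "(tp w, s) \<in> R1"
          then obtain a b where ab: "(a,b) \<in> R" "tp a = tp w" "s = tp b" unfolding R1_def by auto
          with M have aW: "a \<in> W" "b \<in> W" by auto
          have "v a (Box p) = T" "v a p \<noteq> H" using same[OF ab(2) inS(1)] same[OF ab(2) inS(2)] B False by auto
          then have "v b p \<noteq> F" using vm[OF aW(1)] ab aW by blast
          then show "ev W1 R1 V1 s p \<noteq> F" using IH[OF aW(2)] ab by simp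
        qed
      qed
      show ?thesis using IH[OF Box.prems(1)] False eq vm[OF Box.prems(1)]
        by (cases "v w (Box p)") auto
    qed
  qed
  obtain w where w: "w \<in> W" "v w \<phi> \<noteq> F" using assms(2) unfolding satisfiable_in_def by auto
  have e1: "ev W1 R1 V1 (tp w) \<phi> \<noteq> F" using key[OF w(1)] w(2) by (simp add: S_def)
  obtain g :: "(fm \<Rightarrow> wk) \<Rightarrow> nat" and n where g: "g ` W1 = {i. i < n}" "inj_on g W1"
    using finite_imp_inj_to_nat_seg[OF fin] by blast
  define W' where "W' = g ` W1"
  define R' where "R' = (\<lambda>(a,b). (g a, g b)) ` R1"
  define v' where "v' = ev W' R' (\<lambda>x n. V1 (inv_into W1 g x) n)"
  have "finite W'" unfolding W'_def using fin by simp
  moreover have "pwk_model W' R' v'" unfolding v'_def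
    by (rule ev_model) (use M R1W in \<open>auto simp: W'_def R'_def W1_def\<close>)
  moreover have "satisfiable_in \<phi> W' R' v'"
    unfolding satisfiable_in_def
  proof
    have "tp w \<in> W1" using w unfolding W1_def by auto
    then show "g (tp w) \<in> W'" unfolding W'_def by auto
    show "v' (g (tp w)) \<phi> \<noteq> F" unfolding v'_def W'_def R'_def
      using ev_iso[OF g(2) R1W \<open>tp w \<in> W1\<close>] e1 by simp
  qed
  ultimately show ?thesis by blast
qed

end
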